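(* Let $G$ be a graph, $R$ a connected subset of $V(G)$, $s_R\in R$, and let $\mathcal{P}$ be an $R$-shortest path collection. Then for all $u_1,u_2\in U_{\mathcal{P}}$, if $\widehat{\operatorname{prof}}_{R,\mathcal{P}}[u_1]=\widehat{\operatorname{prof}}_{R,\mathcal{P}}[u_2]$ then $\operatorname{prof}_{R,s_R}[u_1]=\operatorname{prof}_{R,s_R}[u_2]$.
   Context: $G$ is an unweighted undirected graph with shortest-path distance $\mathrm{dist}$, and $\mathrm{dist}(v,R)=\min_{y\in R}\mathrm{dist}(v,y)$; $R$ is connected if $G[R]$ is connected. $|Q|$ is the number of edges of a path $Q$, $P[a,b]$ the subpath between $a$ and $b$. For $z\in V(G)$ and $x\in R$, the distance profile $\operatorname{prof}_{R,x}[z]\colon R\to\mathbb{Z}$ is $\operatorname{prof}_{R,x}[z](s)=\mathrm{dist}(z,s)-\mathrm{dist}(z,x)$. Milestones: for a path $P$ from a vertex $v^P$ to a vertex $x^P\in R$ with $|P|=\mathrm{dist}(v^P,R)$, order $V(P)$ from $v^P$ towards $x^P$; $v\in V(P)$ is a milestone of $P$ if $v=x^P$ or $\operatorname{prof}_{R,x^P}[v]\ne \operatorname{prof}_{R,x^P}[u]$ where $u$ is the next vertex after $v$ towards $x^P$. An $R$-shortest path collection is a collection $\mathcal{P}$ of paths in $G$ such that every $P\in\mathcal{P}$ is a path from some $v^P\in V(G)$ to some $x^P\in R$ with $|P|=\mathrm{dist}(v^P,R)$, and $R\subseteq\bigcup_{P\in\mathcal{P}}V(P)$. Let $H_{\mathcal{P}}$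 be the union of the paths of $\mathcal{P}$. A vertex is an anchor vertex if it has degree more than two in $H_{\mathcal{P}}$ or it is a milestone of some $P\in\mathcal{P}$; $A_R(\mathcal{P})$ is the set of anchor vertices. For $P\in\mathcal{P}$ and an anchor $w\in V(P)$, the prefix of $w$ in $P$ is the vertex set of the maximal subpath $Q$ of $P[v^P,w]$ such that $w$ is the only anchor vertex of $P$ in $Q$. Let $U_{\mathcal{P}}=V(G)\setminus\bigcup_{P\in\mathcal{P}}V(P)$. For $u\in U_{\mathcal{P}}$ and $w\in A_R(\mathcal{P})$, define $\widehat{\mathrm{dist}}(u,w)=\min\{|Q_{u,z}|+|P[z,w]| : P\in\mathcal{P},\ w\in V(P),\ z \text{ in the prefix of } w \text{ in } P\}$, where $Q_{u,z}$ is a shortest path among the paths from $u$ to $z$ all of whose internal vertices lie in $U_{\mathcal{P}}$ (terms for which no such path exists are omitted, and $\widehat{\mathrm{dist}}(u,w)=\infty$ if no term remains). The anchor-distance profile is $\operatorname{prof}^*_{R,\mathcal{P}}[u](w)=\widehat{\mathrm{dist}}(u,w)+\mathrm{dist}(w,R)-\mathrm{dist}(u,R)$ for $w\in A_R(\mathcal{P})$, and $\widehat{\operatorname{prof}}_{R,\mathcal{P}}[u](w)=\min\{\operatorname{prof}^*_{R,\mathcal{P}}[u](w),|R|+1\}$. *)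

theory Defs
  imports Main "HOL-Library.Extended_Nat"
begin

definition graph :: "'a set \<Rightarrow> ('a \<Rightarrow> 'a \<Rightarrow> bool) \<Rightarrow> bool" where
  "graph V E \<longleftrightarrow> finite V \<and> (\<forall>x y. E x y \<longrightarrow> x \<in> V \<and> y \<in> V)
     \<and> (\<forall>x y. E x y \<longrightarrow> E y x) \<and> (\<forall>x. \<not> E x x)"

definition is_path :: "'a set \<Rightarrow> ('a \<Rightarrow> 'a \<Rightarrow> bool) \<Rightarrow> 'a list \<Rightarrow> bool" where
  "is_path V E xs \<longleftrightarrow> xs \<noteq> [] \<and> set xs \<subseteq> V \<and> distinct xs
     \<and> (\<forall>i. Suc i < length xs \<longrightarrow> E (xs ! i) (xs ! Suc i))"

definition plen :: "'a list \<Rightarrow> nat" where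
  "plen xs = length xs - 1"

definition connected_set :: "('a \<Rightarrow> 'a \<Rightarrow> bool) \<Rightarrow> 'a set \<Rightarrow> bool" where
  "connected_set E S \<longleftrightarrow> (\<forall>a\<in>S. \<forall>b\<in>S. \<exists>xs. is_path S E xs \<and> hd xs = a \<and> last xs = b)"

definition gdist :: "'a set \<Rightarrow> ('a \<Rightarrow> 'a \<Rightarrow> bool) \<Rightarrow> 'a \<Rightarrow> 'a \<Rightarrow> nat" where
  "gdist V E u v = (LEAST n. \<exists>xs. is_path V E xs \<and> hd xs = u \<and> last xs = v \<and> plen xs = n)"

definition setdist :: "'a set \<Rightarrow> ('a \<Rightarrow> 'a \<Rightarrow> bool) \<Rightarrow> 'a \<Rightarrow> 'a set \<Rightarrow> nat" where
  "setdist V E v R = Min (gdist V E v ` R)"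

definition prof :: "'a set \<Rightarrow> ('a \<Rightarrow> 'a \<Rightarrow> bool) \<Rightarrow> 'a \<Rightarrow> 'a \<Rightarrow> 'a \<Rightarrow> int" where
  "prof V E x z s = int (gdist V E z s) - int (gdist V E z x)"

definition R_shortest_path_collection ::
  "'a set \<Rightarrow> ('a \<Rightarrow> 'a \<Rightarrow> bool) \<Rightarrow> 'a set \<Rightarrow> 'a list set \<Rightarrow> bool" where
  "R_shortest_path_collection V E R Ps \<longleftrightarrow>
     (\<forall>P\<in>Ps. is_path V E P \<and> last P \<in> R \<and> plen P = setdist V E (hd P) R)
     \<and> R \<subseteq> (\<Union>P\<in>Ps. set P)"

definition milestone :: "'a set \<Rightarrow> ('a \<Rightarrow> 'a \<Rightarrow> bool) \<Rightarrow> 'a set \<Rightarrow> 'a list \<Rightarrow> 'a \<Rightarrow> bool" where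
  "milestone V E R P v \<longleftrightarrow> (\<exists>i<length P. P ! i = v \<and>
     (Suc i = length P \<or>
      (\<exists>s\<in>R. prof V E (last P) (P ! i) s \<noteq> prof V E (last P) (P ! Suc i) s)))"

definition H_edge :: "'a list set \<Rightarrow> 'a \<Rightarrow> 'a \<Rightarrow> bool" where
  "H_edge Ps x y \<longleftrightarrow> (\<exists>P\<in>Ps. \<exists>i. Suc i < length P \<and>
     ((P ! i = x \<and> P ! Suc i = y) \<or> (P ! i = y \<and> P ! Suc i = x)))"

definition anchors :: "'a set \<Rightarrow> ('a \<Rightarrow> 'a \<Rightarrow> bool) \<Rightarrow> 'a set \<Rightarrow> 'a list set \<Rightarrow> 'a set" where
  "anchors V E R Ps = {v. card {y. H_edge Ps v y} > 2 \<or> (\<exists>P\<in>Ps. milestone V E R P v)}"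

definition idx :: "'a list \<Rightarrow> 'a \<Rightarrow> nat" where
  "idx P v = (THE i. i < length P \<and> P ! i = v)"

text \<open>Prefix of w in P: vertices of the maximal subpath of P[v^P,w] ending in w
  containing no anchor of P other than w.\<close>
definition prefix_of :: "'a set \<Rightarrow> 'a list \<Rightarrow> 'a \<Rightarrow> 'a set" where
  "prefix_of A P w = {P ! k | k. k \<le> idx P w \<and> (\<forall>m. k \<le> m \<and> m < idx P w \<longrightarrow> P ! m \<notin> A)}"

definition U_set :: "'a set \<Rightarrow> 'a list set \<Rightarrow> 'a set" where
  "U_set V Ps = V - (\<Union>P\<in>Ps. set P)"

text \<open>|Q_{u,z}|: length of a shortest u-z path with all internal vertices in U
  (infinity if none exists).\<close>
definition rdist :: "'a set \<Rightarrow> ('a \<Rightarrow> 'a \<Rightarrow> bool) \<Rightarrow> 'a set \<Rightarrow> 'a \<Rightarrow> 'a \<Rightarrow> enat" where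
  "rdist V E U u z = (INF xs \<in> {xs. is_path V E xs \<and> hd xs = u \<and> last xs = z \<and>
       (\<forall>k. 0 < k \<and> k < length xs - 1 \<longrightarrow> xs ! k \<in> U)}. enat (plen xs))"

definition dist_hat :: "'a set \<Rightarrow> ('a \<Rightarrow> 'a \<Rightarrow> bool) \<Rightarrow> 'a set \<Rightarrow> 'a list set \<Rightarrow> 'a \<Rightarrow> 'a \<Rightarrow> enat" where
  "dist_hat V E R Ps u w = (INF P \<in> {P\<in>Ps. w \<in> set P}.
      INF z \<in> prefix_of (anchors V E R Ps) P w.
        rdist V E (U_set V Ps) u z + enat (idx P w - idx P z))"

definition prof_hat :: "'a set \<Rightarrow> ('a \<Rightarrow> 'a \<Rightarrow> bool) \<Rightarrow> 'a set \<Rightarrow> 'a list set \<Rightarrow> 'a \<Rightarrow> 'a \<Rightarrow> int" where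
  "prof_hat V E R Ps u w = (case dist_hat V E R Ps u w of
       enat d \<Rightarrow> min (int d + int (setdist V E w R) - int (setdist V E u R)) (int (card R) + 1)
     | \<infinity> \<Rightarrow> int (card R) + 1)"

end

theory Submission
  imports Defs
begin


lemma is_path_succ: "is_path V E xs \<longleftrightarrow> xs \<noteq> [] \<and> set xs \<subseteq> V \<and> distinct xs \<and> successively E xs"
  unfolding is_path_def successively_conv_nth by blast

lemma walk_to_path:
  "xs \<noteq> [] \<Longrightarrow> set xs \<subseteq> V \<Longrightarrow> successively E xs \<Longrightarrow>
   \<exists>ys. is_path V E ys \<and> hd ys = hd xs \<and> last ys = last xs \<and> length ys \<le> length xs"
proof (induction xs rule: length_induct)
  case (1 xs)
  show ?case
  proof (cases "distinct xs")
    case True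
    then show ?thesis using 1 by (auto simp: is_path_succ)
  next
    case False
    then obtain as bs cs y where xs: "xs = as@[y]@bs@[y]@cs" using not_distinct_decomp by blast
    let ?ys = "as @ y # cs"
    have "successively E ?ys" using 1(4) unfolding xs
      by (auto simp: successively_append_iff successively_Cons)
    moreover have "set ?ys \<subseteq> V" using 1(3) xs by auto
    moreover have "length ?ys < length xs" using xs by simp
    moreover have "hd ?ys = hd xs" using xs by (cases as) auto
    moreover have "last ?ys = last xs" using xs by (cases cs) auto
    ultimately obtain zs where "is_path V E zs" "hd zs = hd ?ys" "last zs = last ?ys" "length zs \<le> length ?ys"
      using 1(1)[rule_format, of ?ys] by auto
    then show ?thesis using \<open>length ?ys < length xs\<close> \<open>hd ?ys = hd xs\<close> \<open>last ?ys = last xs\<close>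
      by (intro exI[of _ zs]) simp
  qed
qed

lemma gdist_le: "is_path V E xs \<Longrightarrow> gdist V E (hd xs) (last xs) \<le> plen xs"
  unfolding gdist_def by (rule Least_le) blast

lemma gdist_ex:
  assumes "connected_set E V" "u \<in> V" "v \<in> V"
  shows "\<exists>xs. is_path V E xs \<and> hd xs = u \<and> last xs = v \<and> plen xs = gdist V E u v"
proof -
  obtain xs where "is_path V E xs \<and> hd xs = u \<and> last xs = v" using assms unfolding connected_set_def by blast
  then have "\<exists>n xs. is_path V E xs \<and> hd xs = u \<and> last xs = v \<and> plen xs = n" by blast
  from LeastI_ex[OF this] show ?thesis unfolding gdist_def by blast
qed

lemma walk_le: "xs \<noteq> [] \<Longrightarrow> set xs \<subseteq> V \<Longrightarrow> successively E xs \<Longrightarrow>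
   gdist V E (hd xs) (last xs) \<le> length xs - 1"
  using walk_to_path[of xs V E] gdist_le[of V E] unfolding plen_def
  by (metis diff_le_mono order_trans)

lemma gdist_tri:
  assumes "connected_set E V" "u \<in> V" "v \<in> V" "w \<in> V"
  shows "gdist V E u w \<le> gdist V E u v + gdist V E v w"
proof -
  obtain p where p: "is_path V E p" "hd p = u" "last p = v" "plen p = gdist V E u v"
    using gdist_ex assms by metis
  obtain q where q: "is_path V E q" "hd q = v" "last q = w" "plen q = gdist V E v w"
    using gdist_ex assms by metis
  obtain q' where q': "q = v # q'" using q by (cases q) (auto simp: is_path_def)
  have s: "successively E (p @ q')"
    using p q q' by (auto simp: is_path_succ successively_append_iff successively_Cons)
  have "gdist V E (hd (p @ q')) (last (p @ q')) \<le> length (p @ q') - 1"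
    by (rule walk_le) (use p q q' s in \<open>auto simp: is_path_def\<close>)
  moreover have "hd (p @ q') = u" using p by (auto simp: is_path_def)
  moreover have "last (p @ q') = w" using p q q' by (cases q') auto
  ultimately show ?thesis using p q q' by (auto simp: plen_def is_path_def)
qed

lemma is_path_sub:
  assumes "is_path V E P" "i \<le> j" "j < length P"
  shows "is_path V E (drop i (take (Suc j) P)) \<and> hd (drop i (take (Suc j) P)) = P ! i
    \<and> last (drop i (take (Suc j) P)) = P ! j \<and> plen (drop i (take (Suc j) P)) = j - i"
proof -
  let ?Q = "drop i (take (Suc j) P)"
  have len: "length ?Q = Suc j - i" using assms by simp
  have nth: "\<And>m. m < length ?Q \<Longrightarrow> ?Q ! m = P ! (i + m)" using assms by auto
  have ne: "?Q \<noteq> []" using len assms by auto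
  have "is_path V E ?Q" unfolding is_path_def
  proof (intro conjI allI impI)
    show "?Q \<noteq> []" by (rule ne)
    show "set ?Q \<subseteq> V" using assms(1) unfolding is_path_def
      by (meson order_trans set_drop_subset set_take_subset)
    show "distinct ?Q" using assms(1) unfolding is_path_def by simp
    fix k assume k: "Suc k < length ?Q"
    have "?Q ! k = P ! (i + k)" using k by (intro nth) simp
    moreover have "?Q ! Suc k = P ! Suc (i + k)" using nth[OF k] by simp
    moreover have "Suc (i + k) < length P" using k len assms by simp
    ultimately show "E (?Q ! k) (?Q ! Suc k)" using assms(1) unfolding is_path_def by simp
  qed
  moreover have "hd ?Q = P ! i" using assms by (simp add: hd_drop_conv_nth)
  moreover have "last ?Q = P ! j"
  proof -
    have "last ?Q = ?Q ! (length ?Q - 1)" using ne by (rule last_conv_nth)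
    also have "\<dots> = P ! (i + (length ?Q - 1))" by (rule nth) (use ne in simp)
    finally show ?thesis using len assms by simp
  qed
  ultimately show ?thesis using len unfolding plen_def by (intro conjI) simp_all
qed

lemma gdist_sub:
  assumes "is_path V E P" "i \<le> j" "j < length P"
  shows "gdist V E (P ! i) (P ! j) \<le> j - i"
  using is_path_sub[OF assms] gdist_le by metis



lemma idx_nth: "distinct P \<Longrightarrow> i < length P \<Longrightarrow> idx P (P ! i) = i"
  unfolding idx_def by (rule the_equality) (auto simp: nth_eq_iff_index_eq)

lemma idx_in: "w \<in> set P \<Longrightarrow> distinct P \<Longrightarrow> idx P w < length P \<and> P ! idx P w = w"
  by (metis idx_nth in_set_conv_nth)

locale sp =
  fixes V :: "'a set" and E R Ps
  assumes graph: "graph V E" and conV: "connected_set E V" and RV: "R \<subseteq> V"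
    and conR: "connected_set E R" and Rne: "R \<noteq> {}"
    and coll: "R_shortest_path_collection V E R Ps"
begin

abbreviation "d \<equiv> gdist V E"
abbreviation "sd v \<equiv> setdist V E v R"
abbreviation "A \<equiv> anchors V E R Ps"
abbreviation "U \<equiv> U_set V Ps"

lemma finR: "finite R"
  using graph RV unfolding graph_def by (meson finite_subset)

lemma sd_le: "s \<in> R \<Longrightarrow> sd v \<le> d v s"
  unfolding setdist_def using finR by simp

lemma sd_ex: "\<exists>r\<in>R. sd v = d v r"
  unfolding setdist_def using finR Rne
  by (metis (mono_tags, lifting) Min_in finite_imageI image_iff image_is_empty)

lemma sd_tri: "v \<in> V \<Longrightarrow> x \<in> V \<Longrightarrow> sd v \<le> d v x + sd x"
proof -
  assume v: "v \<in> V" and x: "x \<in> V"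
  obtain r where r: "r \<in> R" "sd x = d x r" using sd_ex by blast
  have "sd v \<le> d v r" using sd_le[OF r(1)] .
  also have "\<dots> \<le> d v x + d x r" using gdist_tri[OF conV v x] r RV by blast
  finally show ?thesis using r by simp
qed

lemma PsD: "P \<in> Ps \<Longrightarrow> is_path V E P \<and> last P \<in> R \<and> plen P = sd (hd P)"
  using coll unfolding R_shortest_path_collection_def by blast

lemma R_cov: "R \<subseteq> (\<Union>P\<in>Ps. set P)"
  using coll unfolding R_shortest_path_collection_def by blast

lemma dist_last:
  assumes P: "P \<in> Ps" and i: "i < length P"
  shows "d (P ! i) (last P) = length P - 1 - i"
proof -
  have p: "is_path V E P" "last P \<in> R" "plen P = sd (hd P)" using PsD[OF P] by auto
  have ne: "P \<noteq> []" using p by (simp add: is_path_def)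
  have lastn: "last P = P ! (length P - 1)" using ne by (simp add: last_conv_nth)
  have le: "d (P ! i) (last P) \<le> length P - 1 - i"
    using gdist_sub[OF p(1), of i "length P - 1"] i lastn by simp
  have hd0: "hd P = P ! 0" using ne by (simp add: hd_conv_nth)
  have "d (P ! 0) (P ! i) \<le> i" using gdist_sub[OF p(1), of 0 i] i by simp
  have inV: "P ! 0 \<in> V" "P ! i \<in> V" using p(1) i ne unfolding is_path_def by auto
  have "sd (hd P) \<le> d (P ! 0) (P ! i) + sd (P ! i)" using sd_tri[OF inV] hd0 by simp
  also have "sd (P ! i) \<le> d (P ! i) (last P)" using sd_le[OF p(2)] .
  finally have "length P - 1 \<le> i + d (P ! i) (last P)"
    using p(3) \<open>d (P ! 0) (P ! i) \<le> i\<close> unfolding plen_def by linarith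
  then show ?thesis using le by linarith
qed

lemma step:
  assumes P: "P \<in> Ps" and m: "m < length P" and na: "P ! m \<notin> A" and s: "s \<in> R"
  shows "Suc m < length P \<and> d (P ! m) s = d (P ! Suc m) s + 1"
proof -
  have nm: "\<not> milestone V E R P (P ! m)" using na P unfolding anchors_def by blast
  have sm: "Suc m < length P" using nm m unfolding milestone_def
    by (metis Suc_lessI)
  have "prof V E (last P) (P ! m) s = prof V E (last P) (P ! Suc m) s"
    using nm m s unfolding milestone_def by blast
  then have "int (d (P ! m) s) - int (d (P ! m) (last P)) = int (d (P ! Suc m) s) - int (d (P ! Suc m) (last P))"
    unfolding prof_def .
  moreover have "d (P ! m) (last P) = length P - 1 - m" using dist_last[OF P m] .
  moreover have "d (P ! Suc m) (last P) = length P - 1 - Suc m" using dist_last[OF P sm] .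
  ultimately have "d (P ! m) s = d (P ! Suc m) s + 1" using sm by linarith
  then show ?thesis using sm by simp
qed

lemma chain:
  assumes P: "P \<in> Ps" and s: "s \<in> R"
  shows "k \<le> j \<Longrightarrow> j < length P \<Longrightarrow> (\<forall>m. k \<le> m \<and> m < j \<longrightarrow> P ! m \<notin> A) \<Longrightarrow>
    d (P ! k) s = d (P ! j) s + (j - k)"
proof (induction j)
  case 0
  then show ?case by simp
next
  case (Suc j)
  show ?case
  proof (cases "k = Suc j")
    case True
    then show ?thesis by simp
  next
    case False
    then have kj: "k \<le> j" using Suc by simp
    have IH: "d (P ! k) s = d (P ! j) s + (j - k)" using Suc kj by simp
    have "d (P ! j) s = d (P ! Suc j) s + 1" using step[OF P _ _ s, of j] Suc kj by simp
    then show ?thesis using IH kj by simp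
  qed
qed


lemma PV: "P \<in> Ps \<Longrightarrow> i < length P \<Longrightarrow> P ! i \<in> V"
  using PsD[of P] unfolding is_path_def by (meson nth_mem subsetD)

lemma A_V: "w \<in> A \<Longrightarrow> w \<in> V"
proof -
  assume "w \<in> A"
  then consider (deg) "card {y. H_edge Ps w y} > 2" | (mil) P where "P \<in> Ps" "milestone V E R P w"
    unfolding anchors_def by blast
  then show ?thesis
  proof cases
    case deg
    have "{y. H_edge Ps w y} \<noteq> {}" using deg by (intro notI) simp
    then obtain y where "H_edge Ps w y" by blast
    then obtain P i where "P \<in> Ps" "Suc i < length P" "P ! i = w \<or> P ! Suc i = w"
      unfolding H_edge_def by blast
    then show ?thesis using PV[of P i] PV[of P "Suc i"] by auto
  next
    case mil
    then obtain i where "i < length P" "P ! i = w" unfolding milestone_def by blast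
    then show ?thesis using PV[OF mil(1)] by blast
  qed
qed

lemma rdist_ge: "enat (d u z) \<le> rdist V E U u z"
  unfolding rdist_def
proof (rule INF_greatest)
  fix xs assume "xs \<in> {xs. is_path V E xs \<and> hd xs = u \<and> last xs = z \<and>
       (\<forall>k. 0 < k \<and> k < length xs - 1 \<longrightarrow> xs ! k \<in> U)}"
  then show "enat (d u z) \<le> enat (plen xs)" using gdist_le[of V E xs] by auto
qed

lemma dist_hat_ge:
  assumes u: "u \<in> V"
  shows "enat (d u w) \<le> dist_hat V E R Ps u w"
  unfolding dist_hat_def
proof (intro INF_greatest)
  fix P z assume P: "P \<in> {P \<in> Ps. w \<in> set P}" and z: "z \<in> prefix_of A P w"
  have p: "is_path V E P" "w \<in> set P" using P PsD by auto
  have dist: "distinct P" using p by (simp add: is_path_def)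
  have iw: "idx P w < length P" "P ! idx P w = w" using idx_in[OF p(2) dist] by auto
  obtain k where k: "z = P ! k" "k \<le> idx P w" using z unfolding prefix_of_def by blast
  have kl: "k < length P" using k iw by simp
  have iz: "idx P z = k" using idx_nth[OF dist kl] k by simp
  have zw: "d z w \<le> idx P w - idx P z" using gdist_sub[OF p(1) k(2) iw(1)] k iw iz by simp
  have zV: "z \<in> V" "w \<in> V" using p kl k unfolding is_path_def by auto
  have "d u w \<le> d u z + d z w" using gdist_tri[OF conV u zV(1) zV(2)] .
  then have "enat (d u w) \<le> enat (d u z) + enat (idx P w - idx P z)" using zw by simp
  also have "\<dots> \<le> rdist V E U u z + enat (idx P w - idx P z)"
    using rdist_ge by (rule add_right_mono)
  finally show "enat (d u w) \<le> rdist V E U u z + enat (idx P w - idx P z)" .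
qed

lemma dist_hat_upper:
  assumes u: "u \<in> U" and s: "s \<in> R"
  shows "\<exists>w\<in>A. \<exists>dh. dist_hat V E R Ps u w = enat dh \<and> dh + d w s \<le> d u s"
proof -
  have uV: "u \<in> V" using u unfolding U_set_def by auto
  have sV: "s \<in> V" using s RV by auto
  obtain Q where Q: "is_path V E Q" "hd Q = u" "last Q = s" "plen Q = d u s"
    using gdist_ex[OF conV uV sV] by blast
  have Qne: "Q \<noteq> []" using Q by (simp add: is_path_def)
  let ?L = "length Q - 1"
  have QL: "Q ! ?L = s" using Q(3) Qne by (simp add: last_conv_nth)
  have Q0: "Q ! 0 = u" using Q(2) Qne by (simp add: hd_conv_nth)
  have sU: "s \<notin> U" using s R_cov unfolding U_set_def by auto
  define j where "j = (LEAST j. j < length Q \<and> Q ! j \<notin> U)"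
  have ex: "?L < length Q \<and> Q ! ?L \<notin> U" using Qne QL sU by simp
  have j: "j < length Q" "Q ! j \<notin> U" using LeastI[of "\<lambda>j. j < length Q \<and> Q ! j \<notin> U", OF ex]
    unfolding j_def by auto
  have jmin: "\<And>k. k < j \<Longrightarrow> Q ! k \<in> U"
  proof -
    fix k assume "k < j"
    then show "Q ! k \<in> U" using not_less_Least[of k "\<lambda>j. j < length Q \<and> Q ! j \<notin> U"] j
      unfolding j_def by auto
  qed
  define z where "z = Q ! j"
  have zV: "z \<in> V" using Q(1) j unfolding z_def is_path_def by auto
  then obtain P where P: "P \<in> Ps" "z \<in> set P" using j unfolding z_def U_set_def by auto
  have p: "is_path V E P" "last P \<in> R" using PsD[OF P(1)] by auto
  have dist: "distinct P" using p by (simp add: is_path_def)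
  have Pne: "P \<noteq> []" using p by (simp add: is_path_def)
  define k where "k = idx P z"
  have k: "k < length P" "P ! k = z" using idx_in[OF P(2) dist] unfolding k_def by auto
  let ?PL = "length P - 1"
  have mil: "P ! ?PL \<in> A" unfolding anchors_def milestone_def using P(1) Pne
    by (intro CollectI disjI2 bexI[of _ P]) (auto intro!: exI[of _ ?PL])
  define j' where "j' = (LEAST m. k \<le> m \<and> m < length P \<and> P ! m \<in> A)"
  have ex2: "k \<le> ?PL \<and> ?PL < length P \<and> P ! ?PL \<in> A" using k Pne mil by auto
  have j': "k \<le> j'" "j' < length P" "P ! j' \<in> A"
    using LeastI[of "\<lambda>m. k \<le> m \<and> m < length P \<and> P ! m \<in> A", OF ex2] unfolding j'_def by auto
  have j'min: "\<forall>m. k \<le> m \<and> m < j' \<longrightarrow> P ! m \<notin> A"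
  proof (intro allI impI)
    fix m assume "k \<le> m \<and> m < j'"
    then show "P ! m \<notin> A" using not_less_Least[of m "\<lambda>m. k \<le> m \<and> m < length P \<and> P ! m \<in> A"] j'
      unfolding j'_def by auto
  qed
  define w where "w = P ! j'"
  have wA: "w \<in> A" using j' unfolding w_def by simp
  have wP: "w \<in> set P" using j' unfolding w_def by simp
  have iw: "idx P w = j'" using idx_nth[OF dist j'(2)] unfolding w_def .
  have iz: "idx P z = k" unfolding k_def ..
  have zpre: "z \<in> prefix_of A P w" unfolding prefix_of_def iw using k j' j'min by auto
  have "dist_hat V E R Ps u w \<le> (INF z \<in> prefix_of A P w. rdist V E U u z + enat (idx P w - idx P z))"
    unfolding dist_hat_def using P(1) wP by (intro INF_lower) auto
  also have "\<dots> \<le> rdist V E U u z + enat (idx P w - idx P z)"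
    using zpre by (rule INF_lower)
  also have "rdist V E U u z \<le> enat j"
  proof -
    have sub: "is_path V E (take (Suc j) Q) \<and> hd (take (Suc j) Q) = Q ! 0
      \<and> last (take (Suc j) Q) = Q ! j \<and> plen (take (Suc j) Q) = j"
      using is_path_sub[OF Q(1), of 0 j] j by simp
    have "take (Suc j) Q \<in> {xs. is_path V E xs \<and> hd xs = u \<and> last xs = z \<and>
       (\<forall>k. 0 < k \<and> k < length xs - 1 \<longrightarrow> xs ! k \<in> U)}"
      using sub Q0 jmin j unfolding z_def by auto
    then have "rdist V E U u z \<le> enat (plen (take (Suc j) Q))"
      unfolding rdist_def by (rule INF_lower)
    then show ?thesis using sub by simp
  qed
  finally have dh: "dist_hat V E R Ps u w \<le> enat (j + (j' - k))" using iw iz by simp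
  then obtain dh where dhe: "dist_hat V E R Ps u w = enat dh" "dh \<le> j + (j' - k)"
    by (metis enat_ile enat_ord_simps(1))
  have ch: "d z s = d w s + (j' - k)"
    using chain[OF P(1) s j'(1) j'(2) j'min] k w_def by simp
  have "d z s \<le> ?L - j" using gdist_sub[OF Q(1), of j ?L] j QL unfolding z_def by simp
  then have "j + d z s \<le> d u s" using Q(4) j unfolding plen_def by linarith
  then have "dh + d w s \<le> d u s" using dhe ch by linarith
  then show ?thesis using wA dhe by blast
qed

lemma dist_bound:
  assumes u: "u \<in> V" and s: "s \<in> R"
  shows "d u s \<le> sd u + card R"
proof -
  obtain r where r: "r \<in> R" "sd u = d u r" using sd_ex by blast
  obtain xs where xs: "is_path R E xs" "hd xs = r" "last xs = s"
    using conR r s unfolding connected_set_def by blast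
  have xV: "is_path V E xs" using xs(1) RV unfolding is_path_def by auto
  have "length xs = card (set xs)" using xs(1) by (simp add: is_path_def distinct_card)
  also have "\<dots> \<le> card R" using xs(1) finR by (simp add: is_path_def card_mono)
  finally have "d r s \<le> card R" using gdist_le[OF xV] xs unfolding plen_def by simp
  moreover have "d u s \<le> d u r + d r s" using gdist_tri[OF conV u, of r s] r s RV by auto
  ultimately show ?thesis using r by simp
qed

definition F where "F u s = int (d u s) - int (sd u)"
definition g where "g u s w = prof_hat V E R Ps u w + int (d w s) - int (sd w)"

lemma g_lower:
  assumes u: "u \<in> U" and s: "s \<in> R" and w: "w \<in> A"
  shows "F u s \<le> g u s w"
proof -
  have uV: "u \<in> V" using u unfolding U_set_def by auto
  have b: "d u s \<le> sd u + card R" using dist_bound[OF uV s] .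
  have ws: "sd w \<le> d w s" using sd_le[OF s] .
  show ?thesis
  proof (cases "dist_hat V E R Ps u w")
    case (enat dh)
    have "enat (d u w) \<le> enat dh" using dist_hat_ge[OF uV, of w] enat by simp
    then have "d u w \<le> dh" by simp
    have wV: "w \<in> V" using A_V[OF w] .
    have "d u s \<le> d u w + d w s" using gdist_tri[OF conV uV wV] s RV by auto
    then have "d u s \<le> dh + d w s" using \<open>d u w \<le> dh\<close> by linarith
    then show ?thesis using enat b ws unfolding F_def g_def prof_hat_def by (simp add: min_def)
  next
    case infinity
    then show ?thesis using b ws unfolding F_def g_def prof_hat_def by simp
  qed
qed

lemma g_upper:
  assumes u: "u \<in> U" and s: "s \<in> R"
  shows "\<exists>w\<in>A. g u s w \<le> F u s"
proof -
  obtain w dh where w: "w \<in> A" "dist_hat V E R Ps u w = enat dh" "dh + d w s \<le> d u s"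
    using dist_hat_upper[OF u s] by blast
  have "g u s w \<le> F u s" using w unfolding F_def g_def prof_hat_def by (simp add: min_def)
  then show ?thesis using w by blast
qed

lemma F_eq:
  assumes u1: "u1 \<in> U" and u2: "u2 \<in> U" and s: "s \<in> R"
    and eq: "\<forall>w\<in>A. prof_hat V E R Ps u1 w = prof_hat V E R Ps u2 w"
  shows "F u1 s = F u2 s"
proof -
  have geq: "\<And>w. w \<in> A \<Longrightarrow> g u1 s w = g u2 s w" using eq unfolding g_def by simp
  obtain w1 where "w1 \<in> A" "g u1 s w1 \<le> F u1 s" using g_upper[OF u1 s] by blast
  then have "F u2 s \<le> F u1 s" using g_lower[OF u2 s] geq by force
  moreover obtain w2 where "w2 \<in> A" "g u2 s w2 \<le> F u2 s" using g_upper[OF u2 s] by blast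
  then have "F u1 s \<le> F u2 s" using g_lower[OF u1 s] geq by force
  ultimately show ?thesis by simp
qed

end


theorem lemma3p5:
  fixes V :: "'a set" and E :: "'a \<Rightarrow> 'a \<Rightarrow> bool" and R :: "'a set"
    and Ps :: "'a list set" and sR u1 u2 :: 'a
  assumes "graph V E"
    and "connected_set E V"
    and "R \<subseteq> V" and "connected_set E R" and "sR \<in> R"
    and "R_shortest_path_collection V E R Ps"
    and "u1 \<in> U_set V Ps" and "u2 \<in> U_set V Ps"
    and "\<forall>w\<in>anchors V E R Ps. prof_hat V E R Ps u1 w = prof_hat V E R Ps u2 w"
  shows "\<forall>s\<in>R. prof V E sR u1 s = prof V E sR u2 s"
proof -
  have Rne: "R \<noteq> {}" using assms(5) by blast
  interpret sp V E R Ps using assms Rne by unfold_locales auto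
  show ?thesis
  proof
    fix s assume s: "s \<in> R"
    have "F u1 s = F u2 s" "F u1 sR = F u2 sR"
      using F_eq[OF assms(7) assms(8) _ assms(9)] s assms(5) by auto
    then show "prof V E sR u1 s = prof V E sR u2 s" unfolding prof_def F_def by simp
  qed
qed

end
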